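(* Let $f$ be a scaling function and let $(\sigma_j)_{j\in\mathbb{N}}$ be a sequence of permutations with $|\sigma_j|\to\infty$ that converges at scale $f$ to the increasing limit, i.e. $\rho_{f}(\pi,\sigma_j)\to1$ if $\pi$ is an increasing permutation $12\dots k$ and $\rho_f(\pi,\sigma_j)\to0$ for every other permutation $\pi$. Then for every constant $c\in(0,1)$, the sequence $(\sigma_j)$ also converges at scale $cf$ to the increasing limit.
   Context: A scaling function is a function $f:\mathbb{N}\to\mathbb{R}^+$ with $f(n)\le n$ for all $n$, $f(n)\to\infty$ and $f(n)/n\to 0$. An occurrence of a pattern $\pi\in S_k$ in $\sigma\in S_n$ is a $k$-element set of indices $i_1<\dots<i_k$ such that $\sigma(i_1)\dots\sigma(i_k)$ is order-isomorphic to $\pi$; its width is $i_k-i_1+1$. For real $f\in[k,n]$, $\rho_f(\pi,\sigma)$ is the number of occurrences of $\pi$ in $\sigma$ of width at most $f$ divided by the number of $k$-element subsets of $[n]$ of width at most $f$, and $\rho_f(\pi,\sigma_j)$ means $\rho_{f(|\sigma_j|)}(\pi,\sigma_j)$. Convergence at scale $g$ to $\Xi$ means $\rho_{g(|\sigma_j|)}(\pi,\sigma_j)\to\Xi_\pi$ for every permutation $\pi$. *)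

theory Defs
  imports "HOL-Analysis.Analysis"
begin

text \<open>Permutations of length n are lists that are arrangements of 0,...,n-1
  (0-based values and 0-based positions).\<close>
definition is_perm :: "nat list \<Rightarrow> bool" where
  "is_perm \<sigma> \<longleftrightarrow> distinct \<sigma> \<and> set \<sigma> = {0..<length \<sigma>}"

definition order_iso :: "nat list \<Rightarrow> nat list \<Rightarrow> bool" where
  "order_iso xs ys \<longleftrightarrow> length xs = length ys \<and>
     (\<forall>a<length xs. \<forall>b<length xs. (xs ! a < xs ! b) \<longleftrightarrow> (ys ! a < ys ! b))"

definition width :: "nat set \<Rightarrow> nat" where
  "width I = Max I - Min I + 1"

definition subsets_within :: "real \<Rightarrow> nat \<Rightarrow> nat \<Rightarrow> nat set set" where
  "subsets_within f k n = {I. I \<subseteq> {0..<n} \<and> card I = k \<and> real (width I) \<le> f}"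

definition occurrences_within :: "real \<Rightarrow> nat list \<Rightarrow> nat list \<Rightarrow> nat set set" where
  "occurrences_within f \<pi> \<sigma> = {I \<in> subsets_within f (length \<pi>) (length \<sigma>).
      order_iso (map (\<lambda>i. \<sigma> ! i) (sorted_list_of_set I)) \<pi>}"

definition rho :: "real \<Rightarrow> nat list \<Rightarrow> nat list \<Rightarrow> real" where
  "rho f \<pi> \<sigma> = real (card (occurrences_within f \<pi> \<sigma>)) / real (card (subsets_within f (length \<pi>) (length \<sigma>)))"

definition scaling_function :: "(nat \<Rightarrow> real) \<Rightarrow> bool" where
  "scaling_function f \<longleftrightarrow> (\<forall>n\<ge>1. 0 < f n \<and> f n \<le> real n) \<and> filterlim f at_top sequentially
     \<and> ((\<lambda>n. f n / real n) \<longlonglongrightarrow> 0)"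

definition converges_increasing_at_scale :: "(nat \<Rightarrow> real) \<Rightarrow> (nat \<Rightarrow> nat list) \<Rightarrow> bool" where
  "converges_increasing_at_scale g \<sigma>s \<longleftrightarrow>
     (\<forall>\<pi>. is_perm \<pi> \<and> length \<pi> \<ge> 1 \<longrightarrow>
        ((\<lambda>j. rho (g (length (\<sigma>s j))) \<pi> (\<sigma>s j)) \<longlonglongrightarrow>
           (if \<pi> = [0..<length \<pi>] then 1 else 0)))"

end

theory Submission imports Defs begin

lemma finite_subsets_within: "finite (subsets_within w k n)"
  by (rule finite_subset[of _ "Pow {0..<n}"]) (auto simp: subsets_within_def)

lemma subsets_within_mono: "w1 \<le> w2 \<Longrightarrow> subsets_within w1 k n \<subseteq> subsets_within w2 k n"
  by (auto simp: subsets_within_def)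

lemma card_subs_fam: "card {J. J \<subseteq> {s+1..<s+m} \<and> card J = k} = (m - 1) choose k"
  by (subst n_subsets) auto

lemma card_ins_fam: "card (insert (s::nat) ` {J. J \<subseteq> {s+1..<s+m} \<and> card J = k}) = (m - 1) choose k"
proof -
  have "inj_on (insert s) {J. J \<subseteq> {s+1..<s+m} \<and> card J = k}"
    by (rule inj_onI) (metis Diff_insert_absorb atLeastLessThan_iff mem_Collect_eq not_less_eq_eq subsetD Suc_eq_plus1 order_refl)
  then show ?thesis using card_subs_fam by (simp add: card_image)
qed

lemma card_sub_upper:
  assumes "k \<ge> 1" "0 \<le> w"
  shows "real (card (subsets_within w k n)) \<le> real n * w^(k-1)"
proof -
  define m where "m = nat \<lfloor>w\<rfloor>"
  define A where "A s = insert s ` {J. J \<subseteq> {s+1..<s+m} \<and> card J = k - 1}" for s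
  have sub: "subsets_within w k n \<subseteq> (\<Union>s<n. A s)"
  proof
    fix I assume I: "I \<in> subsets_within w k n"
    then have Isub: "I \<subseteq> {0..<n}" and cI: "card I = k" and wI: "real (width I) \<le> w"
      by (auto simp: subsets_within_def)
    have fI: "finite I" using Isub finite_subset by blast
    have ne: "I \<noteq> {}" using cI assms(1) by auto
    define s where "s = Min I"
    have sI: "s \<in> I" using fI ne s_def by simp
    have sn: "s < n" using sI Isub by auto
    have wm: "width I \<le> m" using wI unfolding m_def by linarith
    have "I - {s} \<subseteq> {s+1..<s+m}"
    proof
      fix x assume x: "x \<in> I - {s}"
      then have "s \<le> x" using fI s_def by simp
      with x have "s < x" by auto
      moreover have "x \<le> Max I" using x fI by simp
      ultimately show "x \<in> {s+1..<s+m}" using wm unfolding width_def s_def by auto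
    qed
    moreover have "card (I - {s}) = k - 1" using cI sI fI by simp
    moreover have "I = insert s (I - {s})" using sI by auto
    ultimately have "I \<in> A s" unfolding A_def by blast
    then show "I \<in> (\<Union>s<n. A s)" using sn by auto
  qed
  have "card (subsets_within w k n) \<le> card (\<Union>s<n. A s)"
    by (rule card_mono[OF _ sub]) (auto simp: A_def)
  also have "\<dots> \<le> (\<Sum>s<n. card (A s))" by (rule card_UN_le) simp
  also have "\<dots> = n * ((m - 1) choose (k - 1))" unfolding A_def card_ins_fam by simp
  finally have c: "real (card (subsets_within w k n)) \<le> real n * real ((m - 1) choose (k - 1))"
    by (metis of_nat_le_iff of_nat_mult)
  have "real ((m - 1) choose (k - 1)) \<le> w^(k-1)"
  proof (cases "k - 1 \<le> m - 1")
    case True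
    then have "real ((m - 1) choose (k - 1)) \<le> real (m-1) ^ (k-1)"
      by (metis binomial_le_pow of_nat_le_iff of_nat_power)
    also have "\<dots> \<le> w^(k-1)"
      by (rule power_mono) (use assms in \<open>auto simp: m_def\<close>, linarith)
    finally show ?thesis .
  next
    case False then show ?thesis using assms by (simp add: binomial_eq_0)
  qed
  then show ?thesis using c
    by (meson mult_left_mono of_nat_0_le_iff order_trans)
qed

lemma card_sub_lower:
  assumes "k \<ge> 1" "m = nat \<lfloor>w\<rfloor>" "k \<le> m" "m \<le> n"
  shows "real (n - m + 1) * real ((m - 1) choose (k - 1)) \<le> real (card (subsets_within w k n))"
proof -
  define B where "B s = insert s ` {J. J \<subseteq> {s+1..<s+m} \<and> card J = k - 1}" for s
  have mw: "real m \<le> w" using assms by linarith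
  have sub: "(\<Union>s\<in>{0..n-m}. B s) \<subseteq> subsets_within w k n"
  proof clarify
    fix s I assume s: "s \<in> {0..n-m}" and I: "I \<in> B s"
    then obtain J where J: "J \<subseteq> {s+1..<s+m}" "card J = k - 1" and IJ: "I = insert s J"
      unfolding B_def by auto
    have fJ: "finite J" using J finite_subset by blast
    have sJ: "s \<notin> J" using J by auto
    have "I \<subseteq> {0..<n}"
    proof
      fix x assume "x \<in> I"
      then have "x \<in> insert s {s+1..<s+m}" using J IJ by auto
      then have "x \<le> s + m - 1" using assms by auto
      then show "x \<in> {0..<n}" using s assms by auto
    qed
    moreover have "card I = k" using IJ fJ sJ J assms by simp
    moreover have "Min I = s" using IJ fJ J by (intro Min_eqI) auto
    moreover have "Max I \<le> s + m - 1"
    proof -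
      have "\<forall>x\<in>I. x \<le> s + m - 1"
      proof
        fix x assume "x \<in> I"
        then have "x \<in> insert s {s+1..<s+m}" using J IJ by auto
        then show "x \<le> s + m - 1" using assms by auto
      qed
      then show ?thesis using IJ fJ by (subst Max_le_iff) auto
    qed
    ultimately show "I \<in> subsets_within w k n" using mw assms
      unfolding subsets_within_def width_def by auto
  qed
  have key: "False" if "insert i X = insert j Y" "X \<subseteq> {Suc i..<i + m}" "Y \<subseteq> {Suc j..<j + m}" "i \<noteq> j" for i j :: nat and X Y
  proof -
    have "i \<in> insert j Y" "j \<in> insert i X" using that(1) by blast+
    then have "j < i" "i < j" using that by auto
    then show False by simp
  qed
  have disj: "\<forall>i\<in>{0..n-m}. \<forall>j\<in>{0..n-m}. i \<noteq> j \<longrightarrow> B i \<inter> B j = {}"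
    unfolding B_def by (auto; metis key)
  have "card (\<Union>s\<in>{0..n-m}. B s) = (\<Sum>s\<in>{0..n-m}. card (B s))"
    by (rule card_UN_disjoint[OF _ _ disj]) (auto simp: B_def)
  also have "\<dots> = (n - m + 1) * ((m - 1) choose (k - 1))" unfolding B_def card_ins_fam by simp
  finally have "(n - m + 1) * ((m - 1) choose (k - 1)) \<le> card (subsets_within w k n)"
    using card_mono[OF finite_subsets_within sub] by simp
  then show ?thesis by (metis of_nat_le_iff of_nat_mult)
qed

lemma occ_sub: "occurrences_within w p s \<subseteq> subsets_within w (length p) (length s)"
  by (auto simp: occurrences_within_def)

lemma finite_occ: "finite (occurrences_within w p s)"
  using finite_subset[OF occ_sub finite_subsets_within] .

lemma iso_inc_unique:
  assumes "is_perm p" "order_iso xs p" "order_iso xs [0..<length p]"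
  shows "p = [0..<length p]"
proof -
  have lt: "p ! a < p ! b" if "a < b" "b < length p" for a b
  proof -
    have h: "\<forall>a<length p. \<forall>b<length p. (a < b) = (p ! a < p ! b)"
      using assms(2,3) unfolding order_iso_def by auto
    show ?thesis using h that by (meson order.strict_trans)
  qed
  have "sorted p" unfolding sorted_iff_nth_mono_less
    using lt by (metis less_imp_le_nat nat_less_le)
  moreover have "distinct p" "set p = {0..<length p}" using assms(1) by (auto simp: is_perm_def)
  ultimately show ?thesis by (intro sorted_distinct_set_unique) auto
qed

lemma occ_disjoint:
  assumes "is_perm p" "p \<noteq> [0..<length p]"
  shows "occurrences_within w p s \<inter> occurrences_within w [0..<length p] s = {}"
  using iso_inc_unique[OF assms(1)] assms(2) by (auto simp: occurrences_within_def)

lemma occ_card_le: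
  assumes "is_perm p" "p \<noteq> [0..<length p]"
  shows "card (occurrences_within w p s) + card (occurrences_within w [0..<length p] s)
     \<le> card (subsets_within w (length p) (length s))"
proof -
  have "card (occurrences_within w p s) + card (occurrences_within w [0..<length p] s)
     = card (occurrences_within w p s \<union> occurrences_within w [0..<length p] s)"
    using occ_disjoint[OF assms] by (simp add: card_Un_disjoint finite_occ)
  also have "\<dots> \<le> card (subsets_within w (length p) (length s))"
    using occ_sub[of w p s] occ_sub[of w "[0..<length p]" s]
    by (intro card_mono finite_subsets_within) auto
  finally show ?thesis .
qed

lemma occ_diff_mono:
  assumes "w1 \<le> w2"
  shows "subsets_within w1 k (length s) - occurrences_within w1 [0..<k] s
     \<subseteq> subsets_within w2 k (length s) - occurrences_within w2 [0..<k] s"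
  using assms by (auto simp: occurrences_within_def subsets_within_def)

lemma card_diff_mono:
  assumes "w1 \<le> w2"
  shows "real (card (subsets_within w1 k (length s))) - real (card (occurrences_within w1 [0..<k] s))
     \<le> real (card (subsets_within w2 k (length s))) - real (card (occurrences_within w2 [0..<k] s))"
proof -
  have i: "occurrences_within w [0..<k] s \<subseteq> subsets_within w k (length s)" for w
    using occ_sub[of w "[0..<k]" s] by simp
  have "card (subsets_within w1 k (length s) - occurrences_within w1 [0..<k] s)
     \<le> card (subsets_within w2 k (length s) - occurrences_within w2 [0..<k] s)"
    by (intro card_mono occ_diff_mono assms) (simp add: finite_subsets_within)
  moreover have "card (occurrences_within w [0..<k] s) \<le> card (subsets_within w k (length s))" for w
    using i by (intro card_mono finite_subsets_within) auto
  ultimately have "card (subsets_within w1 k (length s)) - card (occurrences_within w1 [0..<k] s)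
     \<le> card (subsets_within w2 k (length s)) - card (occurrences_within w2 [0..<k] s)"
    using i[of w1] i[of w2] by (simp add: card_Diff_subset finite_occ)
  then have "real (card (subsets_within w1 k (length s)) - card (occurrences_within w1 [0..<k] s))
     \<le> real (card (subsets_within w2 k (length s)) - card (occurrences_within w2 [0..<k] s))"
    by (simp only: of_nat_le_iff)
  then show ?thesis using \<open>\<And>w. card (occurrences_within w [0..<k] s) \<le> _\<close>
    by (simp add: of_nat_diff)
qed

lemma ratio_bound:
  fixes c w :: real
  assumes "k \<ge> 1" "0 < c" "c < 1" "w \<le> real n" "c * w \<ge> real k + 4"
  shows "real (card (subsets_within w k n)) \<le> ((2 * (real k - 1) / c)^(k-1) / (1 - c)) * real (card (subsets_within (c*w) k n))
    \<and> 0 < real (card (subsets_within (c*w) k n))"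
proof -
  define m where "m = nat \<lfloor>c*w\<rfloor>"
  have w0: "0 \<le> w" using assms by (smt (verit) mult_nonneg_nonneg of_nat_0_le_iff zero_le_mult_iff)
  have cw: "c * w \<le> w" using assms w0 by (simp add: mult_left_le_one_le)
  have km: "k \<le> m" unfolding m_def using assms by linarith
  have mle: "real m \<le> c * w" unfolding m_def using assms by linarith
  have mge: "real m \<ge> c * w - 1" unfolding m_def using assms by linarith
  have mn: "m \<le> n" using mle cw assms(4) by linarith
  have low: "real (n - m + 1) * real ((m - 1) choose (k - 1)) \<le> real (card (subsets_within (c*w) k n))"
    by (rule card_sub_lower[OF assms(1) m_def km mn])
  have up: "real (card (subsets_within w k n)) \<le> real n * w^(k-1)"
    by (rule card_sub_upper[OF assms(1) w0])
  have nm: "real (n - m + 1) \<ge> (1 - c) * real n"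
  proof -
    have "real m \<le> c * real n" using mle assms(2,4) by (smt (verit) mult_left_mono)
    then show ?thesis using mn by (simp add: of_nat_diff algebra_simps)
  qed
  have b1: "1 \<le> (m - 1) choose (k - 1)" using km by (simp add: Suc_leI)
  have pos: "0 < real (card (subsets_within (c*w) k n))"
  proof -
    have "1 \<le> real (n - m + 1) * real ((m - 1) choose (k - 1))"
      using b1 by (metis Suc_eq_plus1 Suc_le_eq mult_le_cancel_right1 nat_1_eq_mult_iff of_nat_1 of_nat_le_iff of_nat_mult linorder_not_less not_less_eq_eq zero_less_Suc le_add2 mult_le_mono)
    then show ?thesis using low by linarith
  qed
  have bin: "(c * w / (2 * (real k - 1)))^(k-1) \<le> real ((m - 1) choose (k - 1))"
  proof (cases "k = 1")
    case True then show ?thesis using b1 by simp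
  next
    case False
    then have k1: "real k - 1 > 0" using assms(1) by simp
    have "c * w / (2 * (real k - 1)) \<le> real (m - 1) / real (k - 1)"
    proof -
      have "real (m - 1) = real m - 1" using km assms(1) by (simp add: of_nat_diff)
      then have h2: "c * w / 2 \<le> real (m - 1)" using mge assms(5) by linarith
      have "0 \<le> real k - 1" using k1 by simp
      from divide_right_mono[OF h2 this]
      have "c * w / 2 / (real k - 1) \<le> real (m - 1) / (real k - 1)" .
      moreover have "real (k - 1) = real k - 1" using assms(1) by (simp add: of_nat_diff)
      ultimately show ?thesis by simp
    qed
    then have "(c * w / (2 * (real k - 1)))^(k-1) \<le> (real (m - 1) / real (k - 1))^(k-1)"
      using k1 assms w0 by (intro power_mono) auto
    also have "\<dots> \<le> real ((m - 1) choose (k - 1))"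
      by (rule binomial_ge_n_over_k_pow_k) (use km in auto)
    finally show ?thesis .
  qed
  have "real n * w^(k-1) \<le> ((2 * (real k - 1) / c)^(k-1) / (1 - c)) * ((1 - c) * real n * (c * w / (2 * (real k - 1)))^(k-1))"
  proof (cases "k = 1")
    case True then show ?thesis using assms by simp
  next
    case False
    then have k1: "real k - 1 > 0" using assms(1) by simp
    have "(2 * (real k - 1) / c)^(k-1) * (c * w / (2 * (real k - 1)))^(k-1) = w^(k-1)"
      unfolding power_mult_distrib[symmetric] using k1 assms(2) by simp
    note pe = this
    have gen: "(a / d) * (d * x * b) = x * (a * b)" if "d \<noteq> 0" for a b d x :: real
      using that by simp
    have d: "1 - c \<noteq> 0" using assms by simp
    have "((2 * (real k - 1) / c)^(k-1) / (1 - c)) * ((1 - c) * real n * (c * w / (2 * (real k - 1)))^(k-1))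
      = real n * w^(k-1)" by (subst gen[OF d], simp only: pe)
    then show ?thesis by simp
  qed
  also have "\<dots> \<le> ((2 * (real k - 1) / c)^(k-1) / (1 - c)) * (real (n - m + 1) * real ((m - 1) choose (k - 1)))"
    using assms nm bin w0 by (intro mult_left_mono mult_mono) auto
  also have "\<dots> \<le> ((2 * (real k - 1) / c)^(k-1) / (1 - c)) * real (card (subsets_within (c*w) k n))"
    using assms low by (intro mult_left_mono) auto
  finally show ?thesis using up pos by linarith
qed


theorem mainTheorem8:
  fixes f :: "nat \<Rightarrow> real" and \<sigma>s :: "nat \<Rightarrow> nat list" and c :: real
  assumes "scaling_function f"
    and "\<And>j. is_perm (\<sigma>s j)"
    and "filterlim (\<lambda>j. length (\<sigma>s j)) at_top sequentially"
    and "converges_increasing_at_scale f \<sigma>s"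
    and "0 < c" and "c < 1"
  shows "converges_increasing_at_scale (\<lambda>n. c * f n) \<sigma>s"
  unfolding converges_increasing_at_scale_def
proof (intro allI impI)
  fix \<pi> assume \<pi>: "is_perm \<pi> \<and> length \<pi> \<ge> 1"
  define k where "k = length \<pi>"
  have k1: "k \<ge> 1" using \<pi> k_def by simp
  define n where "n j = length (\<sigma>s j)" for j
  define F where "F j = f (n j)" for j
  define S where "S j = real (card (subsets_within (F j) k (n j)))" for j
  define S' where "S' j = real (card (subsets_within (c * F j) k (n j)))" for j
  define A where "A j = real (card (occurrences_within (F j) [0..<k] (\<sigma>s j)))" for j
  define A' where "A' j = real (card (occurrences_within (c * F j) [0..<k] (\<sigma>s j)))" for j
  define K where "K = (2 * (real k - 1) / c)^(k-1) / (1 - c)"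
  have K0: "K \<ge> 0" unfolding K_def using assms(5,6) k1 by simp
  have sf1: "\<And>m. m \<ge> 1 \<Longrightarrow> 0 < f m \<and> f m \<le> real m" and sf2: "filterlim f at_top sequentially"
    using assms(1) unfolding scaling_function_def by auto
  have lim1: "(\<lambda>j. A j / S j) \<longlonglongrightarrow> 1"
  proof -
    have "is_perm [0..<k] \<and> length [0..<k] \<ge> 1" using k1 by (simp add: is_perm_def)
    from assms(4)[unfolded converges_increasing_at_scale_def, rule_format, OF this]
    have "(\<lambda>j. rho (f (length (\<sigma>s j))) [0..<k] (\<sigma>s j)) \<longlonglongrightarrow> 1" by simp
    then show ?thesis by (simp add: rho_def A_def S_def F_def n_def)
  qed
  have Finf: "filterlim F at_top sequentially"
    unfolding F_def n_def using filterlim_compose[OF sf2 assms(3)] by simp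
  have ev_n: "eventually (\<lambda>j. n j \<ge> 1) sequentially"
    using assms(3) unfolding n_def filterlim_at_top by simp
  have ev_F: "eventually (\<lambda>j. F j \<ge> (real k + 4) / c) sequentially"
    using Finf unfolding filterlim_at_top by simp
  have ev: "eventually (\<lambda>j. S j \<le> K * S' j \<and> 0 < S' j) sequentially"
    using ev_n ev_F
  proof eventually_elim
    case (elim j)
    have "F j \<le> real (n j)" using sf1[OF elim(1)] F_def by simp
    moreover have "c * F j \<ge> real k + 4" using elim(2) assms(5) by (simp add: field_simps)
    ultimately have r: "real (card (subsets_within (F j) k (n j))) \<le> ((2 * (real k - 1) / c)^(k-1) / (1 - c)) * real (card (subsets_within (c*F j) k (n j)))
    \<and> 0 < real (card (subsets_within (c*F j) k (n j)))"
      by (rule ratio_bound[OF k1 assms(5,6)])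
    show ?case unfolding S_def S'_def K_def by (rule r)
  qed
  define P' where "P' j = real (card (occurrences_within (c * F j) \<pi> (\<sigma>s j)))" for j
  have ev2: "eventually (\<lambda>j. S' j - A' j \<le> S j - A j \<and> A j \<le> S j \<and> A' j \<le> S' j \<and> S' j \<le> S j
      \<and> (\<pi> \<noteq> [0..<k] \<longrightarrow> P' j + A' j \<le> S' j)) sequentially"
    using ev_n ev_F
  proof eventually_elim
    case (elim j)
    have "c * F j \<ge> real k + 4" using elim(2) assms(5) by (simp add: field_simps)
    then have "0 < c * F j" by linarith
    then have F0: "0 \<le> F j" using assms(5) by (simp add: zero_less_mult_iff)
    then have cF: "c * F j \<le> F j" using assms(5,6) by (simp add: mult_left_le_one_le)
    have i1: "S' j - A' j \<le> S j - A j"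
      using card_diff_mono[OF cF, of k "\<sigma>s j"] unfolding S_def S'_def A_def A'_def n_def by simp
    have i2: "A j \<le> S j" "A' j \<le> S' j"
      unfolding S_def S'_def A_def A'_def n_def
      using occ_sub[of _ "[0..<k]" "\<sigma>s j"] by (simp_all add: card_mono finite_subsets_within)
    have i3: "S' j \<le> S j" unfolding S_def S'_def
      by (simp add: card_mono finite_subsets_within subsets_within_mono cF)
    have i4: "P' j + A' j \<le> S' j" if "\<pi> \<noteq> [0..<k]"
    proof -
      have "card (occurrences_within (c * F j) \<pi> (\<sigma>s j)) + card (occurrences_within (c * F j) [0..<length \<pi>] (\<sigma>s j))
         \<le> card (subsets_within (c * F j) (length \<pi>) (length (\<sigma>s j)))"
        using occ_card_le[of \<pi>] \<pi> that k_def by simp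
      then have "real (card (occurrences_within (c * F j) \<pi> (\<sigma>s j)) + card (occurrences_within (c * F j) [0..<length \<pi>] (\<sigma>s j)))
         \<le> real (card (subsets_within (c * F j) (length \<pi>) (length (\<sigma>s j))))"
        by (simp only: of_nat_le_iff)
      then show ?thesis unfolding P'_def A'_def S'_def k_def n_def by simp
    qed
    show ?case using i1 i2 i3 i4 by simp
  qed
  define D where "D j = (S j - A j) / S j" for j
  define E where "E j = (S' j - A' j) / S' j" for j
  have limD: "D \<longlonglongrightarrow> 0"
  proof -
    have "(\<lambda>j. 1 - A j / S j) \<longlonglongrightarrow> 1 - 1" by (intro tendsto_diff tendsto_const lim1)
    moreover have "eventually (\<lambda>j. 1 - A j / S j = D j) sequentially"
      using ev ev2
    proof eventually_elim
      case (elim j)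
      then have "S j > 0" by linarith
      then show ?case unfolding D_def by (simp add: field_simps)
    qed
    ultimately show ?thesis by (simp add: tendsto_cong)
  qed
  have limE: "E \<longlonglongrightarrow> 0"
  proof (rule tendsto_sandwich[of "\<lambda>_. 0" _ _ "\<lambda>j. K * D j"])
    show "eventually (\<lambda>j. 0 \<le> E j) sequentially"
      using ev ev2 by eventually_elim (auto simp: E_def)
    show "eventually (\<lambda>j. E j \<le> K * D j) sequentially"
      using ev ev2
    proof eventually_elim
      case (elim j)
      then have S'0: "S' j > 0" and S0: "S j > 0" by linarith+
      have num: "0 \<le> S j - A j" using elim by linarith
      have "E j \<le> (S j - A j) / S' j" unfolding E_def using elim S'0 by (simp add: divide_right_mono)
      also have "\<dots> = D j * (S j / S' j)" unfolding D_def using S0 S'0 by simp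
      also have "\<dots> \<le> D j * K"
      proof (rule mult_left_mono)
        show "S j / S' j \<le> K" using elim S'0 by (simp add: pos_divide_le_eq)
        show "0 \<le> D j" unfolding D_def using num S0 by simp
      qed
      also have "\<dots> = K * D j" by simp
      finally show ?case .
    qed
    show "(\<lambda>_. 0) \<longlonglongrightarrow> (0::real)" by simp
    show "(\<lambda>j. K * D j) \<longlonglongrightarrow> 0" using tendsto_mult[OF tendsto_const limD, of K] by simp
  qed
  have "(\<lambda>j. rho (c * F j) \<pi> (\<sigma>s j)) \<longlonglongrightarrow> (if \<pi> = [0..<length \<pi>] then 1 else 0)"
  proof (cases "\<pi> = [0..<k]")
    case True
    have "(\<lambda>j. 1 - E j) \<longlonglongrightarrow> 1 - 0" by (intro tendsto_diff tendsto_const limE)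
    moreover have "eventually (\<lambda>j. 1 - E j = rho (c * F j) \<pi> (\<sigma>s j)) sequentially"
      using ev
    proof eventually_elim
      case (elim j)
      then have "S' j > 0" by linarith
      then show ?case unfolding E_def rho_def using True
        by (simp add: field_simps A'_def S'_def n_def)
    qed
    ultimately have "(\<lambda>j. rho (c * F j) \<pi> (\<sigma>s j)) \<longlonglongrightarrow> 1" by (simp add: tendsto_cong)
    moreover have "\<pi> = [0..<length \<pi>]" using True by simp
    ultimately show ?thesis by simp
  next
    case False
    have "\<pi> \<noteq> [0..<length \<pi>]" using False k_def by simp
    then have eq: "(if \<pi> = [0..<length \<pi>] then 1 else 0) = (0::real)" by simp
    have "(\<lambda>j. rho (c * F j) \<pi> (\<sigma>s j)) \<longlonglongrightarrow> 0"
    proof (rule tendsto_sandwich[of "\<lambda>_. 0" _ _ E])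
      show "eventually (\<lambda>j. 0 \<le> rho (c * F j) \<pi> (\<sigma>s j)) sequentially"
        by (simp add: rho_def)
      show "eventually (\<lambda>j. rho (c * F j) \<pi> (\<sigma>s j) \<le> E j) sequentially"
        using ev ev2
      proof eventually_elim
        case (elim j)
        then have S'0: "S' j > 0" by linarith
        have "rho (c * F j) \<pi> (\<sigma>s j) = P' j / S' j"
          unfolding rho_def P'_def S'_def k_def n_def by simp
        also have "\<dots> \<le> E j" unfolding E_def using elim False S'0
          by (intro divide_right_mono) auto
        finally show ?case .
      qed
      show "(\<lambda>_. 0) \<longlonglongrightarrow> (0::real)" by simp
      show "E \<longlonglongrightarrow> 0" by (rule limE)
    qed
    then show ?thesis by (simp only: eq)
  qed
  then show "(\<lambda>j. rho (c * f (length (\<sigma>s j))) \<pi> (\<sigma>s j)) \<longlonglongrightarrow> (if \<pi> = [0..<length \<pi>] then 1 else 0)"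
    by (simp add: F_def n_def)
qed

end
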